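(* For every $n\ge1$ and every $\pi\in S_n$, $\pi$ is $321$-avoiding if and only if $\Phi_4(\pi)$ is a parallelogram polyomino.
   Context: Cells are unit squares $[i,i+1]\times[j,j+1]$ with integer $i,j$; a polyomino is a finite edge-connected set of cells, up to translation. A directed polyomino has a distinguished cell (the source) such that every cell can be reached from the source by a path of cells moving only North or East inside the polyomino. It is column-convex if each column is connected. The (directed) height is the number of distinct diagonal lines $x+y=\text{const}$ passing through centers of its cells. A deco polyomino is a directed column-convex polyomino whose height is attained only in its last (rightmost) column; $D_n$ denotes those of height $n$. Every deco polyomino of height $n$ is built uniquely by $n$ steps from the empty polyomino; at step $j$ one performs either an elevation (add a cell at the bottom of the leftmost column; step 1 is always an elevation) or a column pasting (add a new column of $k$ cells, $1\le k\le j-1$, to the left of the current polyomino so that the bottoms of the first two columns lie at the same level). The bijection $\Phi_4:S_n\to D_n$ is defined through its inverse, recursively: the height-1 polyomino maps to the permutation $1$; if $\delta\in D_n$ arises from $\delta'\in D_{n-1}$ and $\Phi_4^{-1}(\delta')=\pi_1\cdots\pi_{n-1}$, then $\Phi_4^{-1}(\delta)=\pi_1\cdots\pi_{n-1}\,n$ if the last step is an elevation, and $\Phi_4^{-1}(\delta)=\pi_1\cdots\pi_{n-1-k}\,n\,\pi_{n-k}\cdots\pi_{n-1}$ if the last step pastes a column of length $k$. A permutation is $321$-avoiding if there are no indices $i<j<k$ with $\pi_i>\pi_j>\pi_k$. A parallelogram polyomino is a polyomino bounded by two lattice paths with steps $(1,0)$ and $(0,1)$ which intersect only at their common origin and common endpoint.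 *)

theory Defs
  imports Main
begin

(* Cells: the cell (i,j) :: int \<times> int is the unit square [i,i+1] \<times> [j,j+1].
   A polyomino is represented by its set of cells; "up to translation" is handled
   by choosing a representative (constructions) or by existential quantification
   over the position (parallelogram property). *)

type_synonym cell = "int \<times> int"

datatype deco_step = Elev | Paste nat

(* step number j+1 (0-indexed position j): pasting k cells requires 1 \<le> k \<le> (j+1)-1.
   In particular the first step is necessarily an elevation. *)
definition valid_deco_steps :: "deco_step list \<Rightarrow> bool" where
  "valid_deco_steps s \<longleftrightarrow>
     (\<forall>j < length s. case s ! j of Elev \<Rightarrow> True | Paste k \<Rightarrow> 1 \<le> k \<and> k \<le> j)"

definition shift_cells :: "int \<Rightarrow> int \<Rightarrow> cell set \<Rightarrow> cell set" where
  "shift_cells a b P = (\<lambda>(x,y). (x + a, y + b)) ` P"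

(* Representative normalised so that the source (bottom cell of the leftmost column)
   is the cell (0,0).
   Elevation: add a cell at the bottom of the leftmost column (then translate up by 1). *)
fun apply_deco_step :: "cell set \<Rightarrow> deco_step \<Rightarrow> cell set" where
  "apply_deco_step P Elev = insert (0,0) (shift_cells 0 1 P)"
| "apply_deco_step P (Paste k) = {(0, int j) | j. j < k} \<union> shift_cells 1 0 P"

definition build_deco :: "deco_step list \<Rightarrow> cell set" where
  "build_deco s = foldl apply_deco_step {} s"

(* Phi_4^{-1} along the construction: at step n, insert n at the end (elevation)
   or so that exactly k entries follow it (pasting a column of length k). *)
fun perm_step :: "nat list \<Rightarrow> deco_step \<Rightarrow> nat list" where
  "perm_step p Elev = p @ [length p + 1]"
| "perm_step p (Paste k) = take (length p - k) p @ [length p + 1] @ drop (length p - k) p"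

definition perm_of_steps :: "deco_step list \<Rightarrow> nat list" where
  "perm_of_steps s = foldl perm_step [] s"

definition Phi4 :: "nat list \<Rightarrow> cell set" where
  "Phi4 \<pi> = build_deco (THE s. valid_deco_steps s \<and> perm_of_steps s = \<pi>)"

definition avoids321 :: "nat list \<Rightarrow> bool" where
  "avoids321 \<pi> \<longleftrightarrow>
     \<not> (\<exists>i j k. i < j \<and> j < k \<and> k < length \<pi> \<and> \<pi> ! i > \<pi> ! j \<and> \<pi> ! j > \<pi> ! k)"

datatype lstep = StE | StN   (* (1,0) and (0,1) *)

fun path_verts :: "int \<times> int \<Rightarrow> lstep list \<Rightarrow> (int \<times> int) list" where
  "path_verts p [] = [p]"
| "path_verts (x,y) (StE # ps) = (x,y) # path_verts (x+1,y) ps"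
| "path_verts (x,y) (StN # ps) = (x,y) # path_verts (x,y+1) ps"

(* left endpoints of the horizontal unit edges of the path *)
fun east_edges :: "int \<times> int \<Rightarrow> lstep list \<Rightarrow> (int \<times> int) set" where
  "east_edges p [] = {}"
| "east_edges (x,y) (StE # ps) = insert (x,y) (east_edges (x+1,y) ps)"
| "east_edges (x,y) (StN # ps) = east_edges (x,y+1) ps"

(* P is bounded by an upper path U and a lower path L with common origin q and
   common endpoint, meeting only there: the cells of P are exactly the cells (i,j)
   lying in a column i above the horizontal edge of L and below that of U. *)
definition parallelogram_polyomino :: "cell set \<Rightarrow> bool" where
  "parallelogram_polyomino P \<longleftrightarrow>
     (\<exists>q U L.
        last (path_verts q U) = last (path_verts q L) \<and>
        set (path_verts q U) \<inter> set (path_verts q L) = {q, last (path_verts q U)} \<and>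
        P = {(i,j). \<exists>yl yu. (i,yl) \<in> east_edges q L \<and> (i,yu) \<in> east_edges q U
                           \<and> yl \<le> j \<and> j < yu})"

end

theory Submission
  imports Defs
begin


lemma perm_of_steps_snoc: "perm_of_steps (s @ [x]) = perm_step (perm_of_steps s) x"
  by (simp add: perm_of_steps_def)

lemma perm_step_props:
  assumes "distinct p" "set p = {1..length p}"
  shows "distinct (perm_step p x) \<and> set (perm_step p x) = {1..Suc (length p)} \<and> length (perm_step p x) = Suc (length p)"
proof (cases x)
  case Elev
  have "Suc (length p) \<notin> set p" using assms by auto
  then show ?thesis using assms Elev by auto
next
  case (Paste k)
  have nin: "Suc (length p) \<notin> set p" using assms by auto
  let ?a = "length p - k"
  have "distinct (take ?a p @ drop ?a p)" using assms by simp
  then have d: "distinct (take ?a p) \<and> distinct (drop ?a p) \<and> set (take ?a p) \<inter> set (drop ?a p) = {}"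
    by (simp only: distinct_append)
  have "set (take ?a p) \<union> set (drop ?a p) = set p" by (metis set_append append_take_drop_id)
  then show ?thesis using assms Paste nin d
    by (auto simp: distinct_append dest: in_set_takeD in_set_dropD)
qed

lemma perm_of_steps_props:
  "distinct (perm_of_steps s) \<and> set (perm_of_steps s) = {1..length s} \<and> length (perm_of_steps s) = length s"
proof (induction s rule: rev_induct)
  case Nil
  then show ?case by (simp add: perm_of_steps_def)
next
  case (snoc x s)
  then show ?case using perm_step_props[of "perm_of_steps s" x] by (simp add: perm_of_steps_snoc)
qed

lemma valid_snoc: "valid_deco_steps (s @ [x]) \<longleftrightarrow> valid_deco_steps s \<and> (case x of Elev \<Rightarrow> True | Paste k \<Rightarrow> 1 \<le> k \<and> k \<le> length s)"
proof -
  have "valid_deco_steps (s @ [x]) \<longleftrightarrow> (\<forall>j < Suc (length s). case (s@[x]) ! j of Elev \<Rightarrow> True | Paste k \<Rightarrow> 1 \<le> k \<and> k \<le> j)"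
    by (simp add: valid_deco_steps_def)
  also have "\<dots> \<longleftrightarrow> (\<forall>j < length s. case (s@[x]) ! j of Elev \<Rightarrow> True | Paste k \<Rightarrow> 1 \<le> k \<and> k \<le> j) \<and> (case (s@[x]) ! length s of Elev \<Rightarrow> True | Paste k \<Rightarrow> 1 \<le> k \<and> k \<le> length s)"
    by (auto simp: less_Suc_eq)
  also have "\<dots> \<longleftrightarrow> valid_deco_steps s \<and> (case x of Elev \<Rightarrow> True | Paste k \<Rightarrow> 1 \<le> k \<and> k \<le> length s)"
    by (simp add: valid_deco_steps_def nth_append)
  finally show ?thesis .
qed

lemma valid_Nil: "valid_deco_steps []" by (simp add: valid_deco_steps_def)


definition pos :: "deco_step \<Rightarrow> nat" where "pos z = (case z of Elev \<Rightarrow> 0 | Paste k \<Rightarrow> k)"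

lemma pos_le: "(case z of Elev \<Rightarrow> True | Paste k \<Rightarrow> 1 \<le> k \<and> k \<le> l) \<Longrightarrow> pos z \<le> l"
  by (cases z) (simp_all add: pos_def)

lemma pos_inj: "pos z1 = pos z2 \<Longrightarrow> (case z1 of Elev \<Rightarrow> True | Paste k \<Rightarrow> 1 \<le> k \<and> k \<le> l)
   \<Longrightarrow> (case z2 of Elev \<Rightarrow> True | Paste k \<Rightarrow> 1 \<le> k \<and> k \<le> l) \<Longrightarrow> z1 = z2"
  by (cases z1; cases z2) (simp_all add: pos_def)

lemma perm_step_pos: "length r = l \<Longrightarrow> pos z \<le> l \<Longrightarrow>
  perm_step r z = take (l - pos z) r @ Suc l # drop (l - pos z) r"
  by (cases z) (simp_all add: pos_def)

lemma steps_inj: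
  "valid_deco_steps s1 \<Longrightarrow> valid_deco_steps s2 \<Longrightarrow> perm_of_steps s1 = perm_of_steps s2 \<Longrightarrow> s1 = s2"
proof (induction s1 arbitrary: s2 rule: rev_induct)
  case Nil
  have "perm_of_steps [] = []" by (simp add: perm_of_steps_def)
  then show ?case using Nil perm_of_steps_props[of s2] by auto
next
  case (snoc x s)
  have l: "length s2 = Suc (length s)" using snoc.prems(3) perm_of_steps_props[of s2] perm_of_steps_props[of "s@[x]"] by simp
  then obtain s' y where s2: "s2 = s' @ [y]" by (metis length_Suc_conv_rev)
  have ls: "length s' = length s" using l s2 by simp
  let ?p = "perm_of_steps s" and ?q = "perm_of_steps s'"
  have pp: "distinct ?p" "set ?p = {1..length s}" "length ?p = length s" using perm_of_steps_props[of s] by auto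
  have qq: "distinct ?q" "set ?q = {1..length s}" "length ?q = length s" using perm_of_steps_props[of s'] ls by auto
  have np: "Suc (length s) \<notin> set ?p" "Suc (length s) \<notin> set ?q" using pp qq by auto
  have vx: "valid_deco_steps s" "case x of Elev \<Rightarrow> True | Paste k \<Rightarrow> 1 \<le> k \<and> k \<le> length s"
    using snoc.prems(1) valid_snoc by auto
  have vy0: "valid_deco_steps s'" "case y of Elev \<Rightarrow> True | Paste k \<Rightarrow> 1 \<le> k \<and> k \<le> length s'"
    using snoc.prems(2) valid_snoc[of s' y] s2 by auto
  then have vy: "valid_deco_steps s'" "case y of Elev \<Rightarrow> True | Paste k \<Rightarrow> 1 \<le> k \<and> k \<le> length s"
    unfolding ls by auto
  have eq: "perm_step ?p x = perm_step ?q y" using snoc.prems(3) s2 by (simp add: perm_of_steps_snoc)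
  have fx: "perm_step ?p x = take (length s - pos x) ?p @ Suc (length s) # drop (length s - pos x) ?p"
    "length (drop (length s - pos x) ?p) = pos x"
    using perm_step_pos[of ?p "length s" x] pos_le[OF vx(2)] pp(3) by auto
  have fy: "perm_step ?q y = take (length s - pos y) ?q @ Suc (length s) # drop (length s - pos y) ?q"
    "length (drop (length s - pos y) ?q) = pos y"
    using perm_step_pos[of ?q "length s" y] pos_le[OF vy(2)] qq(3) by auto
  have nt: "Suc (length s) \<notin> set (take (length s - pos x) ?p)" "Suc (length s) \<notin> set (drop (length s - pos x) ?p)"
    using np(1) by (meson in_set_takeD, meson in_set_dropD)
  have "take (length s - pos x) ?p = take (length s - pos y) ?q \<and> drop (length s - pos x) ?p = drop (length s - pos y) ?q"
    using eq fx(1) fy(1) append_Cons_eq_iff[OF nt] by simp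
  then have "?p = ?q" "pos x = pos y" using fx(2) fy(2) by (metis append_take_drop_id, metis)
  have "x = y" using pos_inj[OF \<open>pos x = pos y\<close> vx(2) vy(2)] .
  moreover have "s = s'" using snoc.IH[OF vx(1) vy(1) \<open>?p = ?q\<close>] .
  ultimately show ?case using s2 by simp
qed

lemma steps_exist:
  "distinct \<pi> \<Longrightarrow> set \<pi> = {1..n} \<Longrightarrow> \<exists>s. valid_deco_steps s \<and> perm_of_steps s = \<pi>"
proof (induction n arbitrary: \<pi>)
  case 0
  then show ?case using valid_Nil by (auto simp: perm_of_steps_def)
next
  case (Suc n)
  have "Suc n \<in> set \<pi>" using Suc.prems by auto
  then obtain A B where AB: "\<pi> = A @ Suc n # B" by (meson split_list)
  have dA: "distinct (A @ B)" "Suc n \<notin> set (A @ B)" using Suc.prems(1) AB by auto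
  have "set (A @ B) = {1..n}"
  proof -
    have "set \<pi> = insert (Suc n) (set (A @ B))" using AB by auto
    moreover have "{1..Suc n} = insert (Suc n) {1..n}" by auto
    ultimately have "insert (Suc n) (set (A @ B)) = insert (Suc n) {1..n}" using Suc.prems(2) by simp
    moreover have "Suc n \<notin> {1..n}" by simp
    ultimately show ?thesis using dA(2) by (metis insert_ident)
  qed
  then obtain s where s: "valid_deco_steps s" "perm_of_steps s = A @ B" using Suc.IH dA by blast
  have lAB: "length (A @ B) = n"
    using \<open>set (A @ B) = {1..n}\<close> dA(1) distinct_card[of "A @ B"] by simp
  have ls: "length s = n" "length (A @ B) = n"
    using perm_of_steps_props[of s] s lAB by auto
  show ?case
  proof (cases B)
    case Nil
    then show ?thesis using s ls AB valid_snoc[of s Elev]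
      by (intro exI[of _ "s @ [Elev]"]) (simp add: perm_of_steps_snoc)
  next
    case (Cons c B')
    have "1 \<le> length B" "length B \<le> length s" using Cons ls by auto
    moreover have "perm_step (A @ B) (Paste (length B)) = A @ Suc n # B" using ls by simp
    ultimately show ?thesis using s AB valid_snoc[of s "Paste (length B)"]
      by (intro exI[of _ "s @ [Paste (length B)]"]) (simp add: perm_of_steps_snoc)
  qed
qed



lemma nth_ins_lt: "j < length A \<Longrightarrow> (A @ m # B) ! j = (A @ B) ! j"
  by (simp add: nth_append)
lemma nth_ins_ge: "length A \<le> j \<Longrightarrow> (A @ m # B) ! Suc j = (A @ B) ! j"
  by (simp add: nth_append Suc_diff_le)
lemma nth_ins_eq: "(A @ m # B) ! length A = m"
  by (simp add: nth_append)

lemma avoid_insert: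
  assumes lt: "\<forall>x\<in>set A \<union> set B. x < m"
  shows "avoids321 (A @ m # B) \<longleftrightarrow> avoids321 (A @ B) \<and> sorted B"
proof
  assume av: "avoids321 (A @ m # B)"
  define f where "f j = (if j < length A then j else Suc j)" for j
  have fv: "(A @ m # B) ! f j = (A @ B) ! j" for j
    unfolding f_def using nth_ins_lt[of j A m B] nth_ins_ge[of A j m B] by (simp add: not_less)
  have fm: "i < j \<Longrightarrow> f i < f j" for i j unfolding f_def by auto
  have fl: "j < length (A @ B) \<Longrightarrow> f j < length (A @ m # B)" for j unfolding f_def by auto
  have "avoids321 (A @ B)"
    unfolding avoids321_def
  proof
    assume "\<exists>i j k. i < j \<and> j < k \<and> k < length (A @ B) \<and> (A @ B) ! i > (A @ B) ! j \<and> (A @ B) ! j > (A @ B) ! k"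
    then obtain i j k where h: "i < j" "j < k" "k < length (A @ B)" "(A @ B) ! i > (A @ B) ! j" "(A @ B) ! j > (A @ B) ! k" by blast
    then show False using av unfolding avoids321_def
      using fm[OF h(1)] fm[OF h(2)] fl[OF h(3)] fv by metis
  qed
  moreover have "sorted B"
    unfolding sorted_iff_nth_mono_less
  proof (intro allI impI)
    fix i j assume h0: "i < j" "j < length B"
    then have h: "i < j \<and> j < length B" by simp
    show "B ! i \<le> B ! j"
    proof (rule ccontr)
      assume "\<not> B ! i \<le> B ! j"
      moreover have "B ! i < m" using lt h by auto
      moreover have "(A @ m # B) ! (Suc (length A + i)) = B ! i" "(A @ m # B) ! (Suc (length A + j)) = B ! j"
        by (simp_all add: nth_append)
      ultimately show False using av h nth_ins_eq[of A m B] unfolding avoids321_def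
        by (metis (no_types, lifting) Suc_less_eq add_Suc_right add_less_cancel_left le_add1 length_Cons length_append
              less_Suc_eq_le not_le)
    qed
  qed
  ultimately show "avoids321 (A @ B) \<and> sorted B" by blast
next
  assume h0: "avoids321 (A @ B) \<and> sorted B"
  show "avoids321 (A @ m # B)"
    unfolding avoids321_def
  proof
    assume "\<exists>i j k. i < j \<and> j < k \<and> k < length (A @ m # B) \<and> (A @ m # B) ! i > (A @ m # B) ! j \<and> (A @ m # B) ! j > (A @ m # B) ! k"
    then obtain a b c where h: "a < b" "b < c" "c < length (A @ m # B)" "(A @ m # B) ! a > (A @ m # B) ! b" "(A @ m # B) ! b > (A @ m # B) ! c" by blast
    let ?l = "length A" and ?p = "A @ m # B"
    have inA: "x < ?l \<Longrightarrow> ?p ! x < m" for x using lt by (simp add: nth_append)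
    show False
    proof (cases "b = ?l \<or> c = ?l")
      case True
      then show ?thesis
      proof
        assume "b = ?l" then show False using h inA[of a] nth_ins_eq[of A m B] by simp
      next
        assume "c = ?l" then show False using h inA[of b] nth_ins_eq[of A m B] by simp
      qed
    next
      case nbc: False
      show ?thesis
      proof (cases "a = ?l")
        case True
        have "?p ! b = B ! (b - Suc ?l)" "?p ! c = B ! (c - Suc ?l)" using True h nbc by (simp_all add: nth_append)
        moreover have "b - Suc ?l < c - Suc ?l" "c - Suc ?l < length B" using True h nbc by auto
        ultimately show False using h0 h(5) unfolding sorted_iff_nth_mono_less by (metis not_le)
      next
        case False
        define g where "g x = (if x < ?l then x else x - 1)" for x
        have gv: "x \<noteq> ?l \<Longrightarrow> ?p ! x = (A @ B) ! g x" for x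
          unfolding g_def using nth_ins_lt[of x A m B] nth_ins_ge[of A "x - 1" m B] by (cases x) auto
        have gm: "x < y \<Longrightarrow> x \<noteq> ?l \<Longrightarrow> y \<noteq> ?l \<Longrightarrow> g x < g y" for x y unfolding g_def by auto
        have gl: "g c < length (A @ B)" using h nbc unfolding g_def by auto
        show False using h0 unfolding avoids321_def
          using gm[of a b] gm[of b c] gl gv[of a] gv[of b] gv[of c] h False nbc by metis
      qed
    qed
  qed
qed



fun cstep :: "(nat \<times> nat) list \<Rightarrow> deco_step \<Rightarrow> (nat \<times> nat) list" where
  "cstep [] Elev = [(0,1)]"
| "cstep ((b,t)#cs) Elev = (0, Suc t) # map (\<lambda>(b,t). (Suc b, Suc t)) cs"
| "cstep cs (Paste k) = (0,k) # cs"

definition cols :: "deco_step list \<Rightarrow> (nat \<times> nat) list" where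
  "cols s = foldl cstep [] s"

lemma cols_snoc: "cols (s @ [x]) = cstep (cols s) x" by (simp add: cols_def)

definition cells_of :: "(nat \<times> nat) list \<Rightarrow> cell set" where
  "cells_of cs = {(int i, int j) | i j. i < length cs \<and> fst (cs!i) \<le> j \<and> j < snd (cs!i)}"

lemma cells_of_Nil: "cells_of [] = {}" by (simp add: cells_of_def)

lemma cells_of_Cons: "cells_of ((b,t)#cs) = {(0, int j) | j. b \<le> j \<and> j < t} \<union> shift_cells 1 0 (cells_of cs)"
proof (rule set_eqI)
  fix z :: cell
  show "z \<in> cells_of ((b,t)#cs) \<longleftrightarrow> z \<in> {(0, int j) | j. b \<le> j \<and> j < t} \<union> shift_cells 1 0 (cells_of cs)"
  proof
    assume "z \<in> cells_of ((b,t)#cs)"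
    then obtain i j where z: "z = (int i, int j)" "i < Suc (length cs)" "fst (((b,t)#cs)!i) \<le> j" "j < snd (((b,t)#cs)!i)"
      unfolding cells_of_def by auto
    show "z \<in> {(0, int j) | j. b \<le> j \<and> j < t} \<union> shift_cells 1 0 (cells_of cs)"
    proof (cases i)
      case 0 then show ?thesis using z by auto
    next
      case (Suc i')
      have "(int i', int j) \<in> cells_of cs" using z Suc unfolding cells_of_def by auto
      then show ?thesis using z Suc unfolding shift_cells_def by (auto intro!: image_eqI[of _ _ "(int i', int j)"])
    qed
  next
    assume "z \<in> {(0, int j) | j. b \<le> j \<and> j < t} \<union> shift_cells 1 0 (cells_of cs)"
    then show "z \<in> cells_of ((b,t)#cs)"
    proof
      assume "z \<in> {(0, int j) | j. b \<le> j \<and> j < t}"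
      then show ?thesis unfolding cells_of_def by force
    next
      assume "z \<in> shift_cells 1 0 (cells_of cs)"
      then obtain i j where "z = (int i + 1, int j)" "i < length cs" "fst (cs!i) \<le> j" "j < snd (cs!i)"
        unfolding shift_cells_def cells_of_def by auto
      then show ?thesis unfolding cells_of_def
        by (intro CollectI exI[of _ "Suc i"] exI[of _ j]) auto
    qed
  qed
qed

definition sh :: "nat \<times> nat \<Rightarrow> nat \<times> nat" where "sh = (\<lambda>(b,t). (Suc b, Suc t))"

lemma cells_of_map_sh: "cells_of (map sh cs) = shift_cells 0 1 (cells_of cs)"
proof (rule set_eqI)
  fix z :: cell
  show "z \<in> cells_of (map sh cs) \<longleftrightarrow> z \<in> shift_cells 0 1 (cells_of cs)"
  proof
    assume "z \<in> cells_of (map sh cs)"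
    then obtain i j where z: "z = (int i, int j)" "i < length cs" "Suc (fst (cs!i)) \<le> j" "j < Suc (snd (cs!i))"
      unfolding cells_of_def sh_def by (auto split: prod.splits)
    then have "(int i, int (j - 1)) \<in> cells_of cs" unfolding cells_of_def
      by (intro CollectI exI[of _ i] exI[of _ "j - 1"]) auto
    then show "z \<in> shift_cells 0 1 (cells_of cs)" using z unfolding shift_cells_def
      by (auto intro!: image_eqI[of _ _ "(int i, int (j - 1))"])
  next
    assume "z \<in> shift_cells 0 1 (cells_of cs)"
    then obtain i j where "z = (int i, int j + 1)" "i < length cs" "fst (cs!i) \<le> j" "j < snd (cs!i)"
      unfolding shift_cells_def cells_of_def by auto
    then show "z \<in> cells_of (map sh cs)" unfolding cells_of_def sh_def
      by (intro CollectI exI[of _ i] exI[of _ "Suc j"]) (auto split: prod.splits)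
  qed
qed

lemma cstep_Elev_Cons: "cstep ((b,t)#cs) Elev = (0, Suc t) # map sh cs"
  by (simp add: sh_def)

lemma shift_shift: "shift_cells 0 1 (shift_cells 1 0 A) = shift_cells 1 0 (shift_cells 0 1 A)"
  unfolding shift_cells_def image_image by (intro image_cong) (auto split: prod.splits)

lemma shift_union: "shift_cells a b (A \<union> B) = shift_cells a b A \<union> shift_cells a b B"
  unfolding shift_cells_def by auto

lemma col_shift: "insert (0,0) (shift_cells 0 1 {(0, int j) | j. j < t}) = {(0, int j) | j. j < Suc t}"
proof (rule set_eqI)
  fix z :: cell
  show "z \<in> insert (0,0) (shift_cells 0 1 {(0, int j) | j. j < t}) \<longleftrightarrow> z \<in> {(0, int j) | j. j < Suc t}"
  proof
    assume "z \<in> insert (0,0) (shift_cells 0 1 {(0, int j) | j. j < t})"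
    then show "z \<in> {(0, int j) | j. j < Suc t}"
    proof
      assume "z = (0,0)" then show ?thesis by force
    next
      assume "z \<in> shift_cells 0 1 {(0, int j) | j. j < t}"
      then obtain j where "z = (0, int j + 1)" "j < t" unfolding shift_cells_def by auto
      then show ?thesis by (intro CollectI exI[of _ "Suc j"]) auto
    qed
  next
    assume "z \<in> {(0, int j) | j. j < Suc t}"
    then obtain j where j: "z = (0, int j)" "j < Suc t" by auto
    show "z \<in> insert (0,0) (shift_cells 0 1 {(0, int j) | j. j < t})"
    proof (cases j)
      case 0 then show ?thesis using j by simp
    next
      case (Suc j')
      have "(0, int j') \<in> {(0, int j) | j. j < t}" using j Suc by auto
      then have "(0, int j' + 1) \<in> shift_cells 0 1 {(0, int j) | j. j < t}"
        unfolding shift_cells_def by force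
      moreover have "z = (0, int j' + 1)" using j Suc by simp
      ultimately show ?thesis by blast
    qed
  qed
qed

lemma build_cols: "build_deco s = cells_of (cols s) \<and> (cols s = [] \<or> fst (hd (cols s)) = 0)"
proof (induction s rule: rev_induct)
  case Nil
  then show ?case by (simp add: build_deco_def cols_def cells_of_Nil)
next
  case (snoc x s)
  have bs: "build_deco (s @ [x]) = apply_deco_step (build_deco s) x" by (simp add: build_deco_def)
  show ?case
  proof (cases x)
    case Elev
    show ?thesis
    proof (cases "cols s")
      case Nil
      then show ?thesis using snoc Elev bs
        by (auto simp: cols_snoc cells_of_def shift_cells_def)
    next
      case (Cons c rest)
      obtain t where c: "c = (0, t)" using snoc.IH Cons by (cases c) auto
      have "apply_deco_step (build_deco s) x = insert (0,0) (shift_cells 0 1 (cells_of ((0,t)#rest)))"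
        using snoc.IH Cons c Elev by simp
      also have "\<dots> = cells_of ((0, Suc t) # map sh rest)"
      proof -
        have "insert (0,0) (shift_cells 0 1 (cells_of ((0,t)#rest))) = insert (0,0) (shift_cells 0 1 {(0,int j)|j. j<t}) \<union> shift_cells 0 1 (shift_cells 1 0 (cells_of rest))"
          by (simp add: cells_of_Cons shift_union)
        also have "\<dots> = {(0,int j)|j. j < Suc t} \<union> shift_cells 1 0 (shift_cells 0 1 (cells_of rest))"
          by (simp only: col_shift shift_shift)
        also have "\<dots> = cells_of ((0,Suc t)#map sh rest)" by (simp add: cells_of_Cons cells_of_map_sh)
        finally show ?thesis .
      qed
      finally show ?thesis using bs Cons c Elev by (simp add: cols_snoc sh_def)
    qed
  next
    case (Paste k)
    then show ?thesis using snoc bs by (simp add: cols_snoc cells_of_Cons)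
  qed
qed



fun inv0 :: "(nat \<times> nat) list \<Rightarrow> bool" where
  "inv0 [] = True"
| "inv0 [(b,t)] = (b < t)"
| "inv0 ((b,t)#(b',t')#cs) = (b < t \<and> b \<le> b' \<and> b' < t \<and> inv0 ((b',t')#cs))"

fun tops :: "(nat \<times> nat) list \<Rightarrow> bool" where
  "tops [] = True"
| "tops [_] = True"
| "tops ((b,t)#(b',t')#cs) = (t \<le> t' \<and> tops ((b',t')#cs))"

lemma inv0_sh: "inv0 (map sh cs) = inv0 cs"
  by (induction cs rule: inv0.induct) (auto simp: sh_def)
lemma tops_sh: "tops (map sh cs) = tops cs"
  by (induction cs rule: tops.induct) (auto simp: sh_def)

lemma inv0_Elev: "inv0 ((0,t)#rest) \<Longrightarrow> inv0 ((0,Suc t)#map sh rest)"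
proof (cases rest)
  case (Cons c r)
  assume a: "inv0 ((0,t)#rest)"
  obtain b' t' where c: "c = (b',t')" by (cases c)
  have "inv0 (map sh rest)" using a Cons c inv0_sh[of rest] by simp
  then show ?thesis using a Cons c by (simp add: sh_def)
qed simp

lemma tops_Elev: "tops ((0,Suc t)#map sh rest) = tops ((0,t)#rest)"
proof (cases rest)
  case (Cons c r)
  obtain b' t' where c: "c = (b',t')" by (cases c)
  have "tops (map sh rest) = tops rest" using tops_sh by blast
  then show ?thesis using Cons c by (simp add: sh_def)
qed simp

lemma main_inv:
  assumes "valid_deco_steps s" "s \<noteq> []"
  shows "cols s \<noteq> [] \<and> fst (hd (cols s)) = 0 \<and> inv0 (cols s) \<and> snd (hd (cols s)) \<le> length s
    \<and> (avoids321 (perm_of_steps s) \<longleftrightarrow> tops (cols s))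
    \<and> (tops (cols s) \<longrightarrow> sorted (drop (length s - snd (hd (cols s))) (perm_of_steps s))
        \<and> (snd (hd (cols s)) < length s \<longrightarrow> \<not> sorted (drop (length s - snd (hd (cols s)) - 1) (perm_of_steps s))))"
  using assms
proof (induction s rule: rev_induct)
  case Nil
  then show ?case by simp
next
  case (snoc x s)
  have vs: "valid_deco_steps s" "case x of Elev \<Rightarrow> True | Paste k \<Rightarrow> 1 \<le> k \<and> k \<le> length s"
    using snoc.prems(1) valid_snoc by auto
  show ?case
  proof (cases "s = []")
    case True
    then have "x = Elev" using vs(2) by (cases x) auto
    then show ?thesis using True
      by (simp add: cols_def perm_of_steps_def avoids321_def)
  next
    case False
    note IH = snoc.IH[OF vs(1) False]
    define p where "p = perm_of_steps s"
    define l where "l = length s"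
    obtain t rest where cs: "cols s = (0,t) # rest"
      using IH by (cases "cols s") auto
    have pp: "distinct p" "set p = {1..l}" "length p = l" using perm_of_steps_props[of s] p_def l_def by auto
    have lt: "\<forall>y\<in>set p. y < Suc l" using pp by auto
    have I: "inv0 ((0,t)#rest)" "t \<le> l" "avoids321 p \<longleftrightarrow> tops ((0,t)#rest)"
       "tops ((0,t)#rest) \<Longrightarrow> sorted (drop (l - t) p)"
       "tops ((0,t)#rest) \<Longrightarrow> t < l \<Longrightarrow> \<not> sorted (drop (l - t - 1) p)"
      using IH cs p_def l_def by auto
    show ?thesis
    proof (cases x)
      case Elev
      have c': "cols (s @ [x]) = (0, Suc t) # map sh rest" using Elev cs by (simp add: cols_snoc sh_def)
      have p': "perm_of_steps (s @ [x]) = p @ Suc l # []" using Elev p_def l_def perm_of_steps_props[of s] by (simp add: perm_of_steps_snoc)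
      have av: "avoids321 (p @ Suc l # []) \<longleftrightarrow> avoids321 p" using avoid_insert[of p "[]" "Suc l"] lt by simp
      have s1: "sorted (drop (Suc l - Suc t) (p @ [Suc l]))" if "tops ((0,t)#rest)"
      proof -
        have "drop (Suc l - Suc t) (p @ [Suc l]) = drop (l - t) p @ [Suc l]" using pp(3) I(2) by simp
        moreover have "\<forall>y\<in>set (drop (l - t) p). y \<le> Suc l" using lt by (meson in_set_dropD less_imp_le)
        ultimately show ?thesis using I(4)[OF that] by (simp add: sorted_append)
      qed
      have s2: "\<not> sorted (drop (Suc l - Suc t - 1) (p @ [Suc l]))" if "tops ((0,t)#rest)" "Suc t < Suc l"
      proof -
        have "drop (Suc l - Suc t - 1) (p @ [Suc l]) = drop (l - t - 1) p @ [Suc l]" using pp(3) that(2) by simp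
        then show ?thesis using I(5)[OF that(1)] that(2) by (simp add: sorted_append)
      qed
      show ?thesis using c' p' av I inv0_Elev[OF I(1)] tops_Elev[of t rest] s1 s2 l_def by simp
    next
      case (Paste k)
      have k: "1 \<le> k" "k \<le> l" using vs(2) Paste l_def by auto
      have c': "cols (s @ [x]) = (0, k) # (0,t) # rest" using Paste cs by (simp add: cols_snoc)
      have p': "perm_of_steps (s @ [x]) = take (l - k) p @ Suc l # drop (l - k) p"
        using Paste p_def l_def perm_of_steps_props[of s] by (simp add: perm_of_steps_snoc)
      have lt2: "\<forall>y\<in>set (take (l - k) p) \<union> set (drop (l - k) p). y < Suc l" using lt
        by (auto dest: in_set_takeD in_set_dropD)
      have av: "avoids321 (perm_of_steps (s @ [x])) \<longleftrightarrow> avoids321 p \<and> sorted (drop (l - k) p)"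
        using avoid_insert[OF lt2] p' by simp
      have tp: "tops ((0, k) # (0,t) # rest) \<longleftrightarrow> k \<le> t \<and> tops ((0,t)#rest)" by simp
      have sk: "sorted (drop (l - k) p) \<longleftrightarrow> k \<le> t" if tp0: "tops ((0,t)#rest)"
      proof
        assume srt: "sorted (drop (l - k) p)"
        show "k \<le> t"
        proof (rule ccontr)
          assume "\<not> k \<le> t"
          then have "t < l" "l - k \<le> l - t - 1" using k by auto
          then have "drop (l - t - 1) p = drop ((l - t - 1) - (l - k)) (drop (l - k) p)" by simp
          then have "sorted (drop (l - t - 1) p)" using srt sorted_wrt_drop by metis
          then show False using I(5)[OF tp0 \<open>t < l\<close>] by simp
        qed
      next
        assume "k \<le> t"
        then have "drop (l - k) p = drop (t - k) (drop (l - t) p)" using I(2) k by simp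
        then show "sorted (drop (l - k) p)" using I(4)[OF tp0] sorted_wrt_drop by metis
      qed
      have avt: "avoids321 (perm_of_steps (s @ [x])) \<longleftrightarrow> tops ((0, k) # (0,t) # rest)"
        using av tp sk I(3) by blast
      have suf1: "drop (Suc l - k) (take (l - k) p @ Suc l # drop (l - k) p) = drop (l - k) p"
        using pp(3) k by simp
      have suf2: "drop (Suc l - k - 1) (take (l - k) p @ Suc l # drop (l - k) p) = Suc l # drop (l - k) p"
        using pp(3) k by (simp add: min_def)
      have ne: "drop (l - k) p \<noteq> []" using pp(3) k by simp
      have ns: "\<not> sorted (Suc l # drop (l - k) p)"
      proof
        assume "sorted (Suc l # drop (l - k) p)"
        then have "\<forall>y\<in>set (drop (l - k) p). Suc l \<le> y" by simp
        then show False using ne lt2 by (metis UnCI last_in_set not_le)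
      qed
      have ts: "tops ((0, k) # (0,t) # rest) \<Longrightarrow> sorted (drop (l - k) p)" using tp sk by blast
      have len: "length (s @ [x]) = Suc l" using l_def by simp
      have iv: "inv0 ((0, k) # (0,t) # rest)" using I(1) k by simp
      have g1: "tops ((0, k) # (0,t) # rest) \<longrightarrow> sorted (drop (Suc l - k) (take (l - k) p @ Suc l # drop (l - k) p))
         \<and> (k < Suc l \<longrightarrow> \<not> sorted (drop (Suc l - k - 1) (take (l - k) p @ Suc l # drop (l - k) p)))"
        unfolding suf1 suf2 using ns ts by blast
      show ?thesis unfolding c' p'[symmetric] len list.sel prod.sel using iv k avt g1 p' by simp
    qed
  qed
qed



lemma ee_ge: "(a, c) \<in> east_edges (x, y) ps \<Longrightarrow> x \<le> a \<and> y \<le> c"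
  by (induction "(x,y)" ps arbitrary: x y rule: east_edges.induct) fastforce+

lemma ee_mono: "(x1, y1) \<in> east_edges p ps \<Longrightarrow> (x2, y2) \<in> east_edges p ps \<Longrightarrow> x1 \<le> x2 \<Longrightarrow> y1 \<le> y2"
proof (induction p ps rule: east_edges.induct)
  case (1 p) then show ?case by simp
next
  case (2 x y ps)
  show ?case
  proof (cases "(x1,y1) = (x,y)")
    case True
    then show ?thesis using 2 ee_ge[of x2 y2 "x+1" y ps] by auto
  next
    case False
    then have h1: "(x1,y1) \<in> east_edges (x+1,y) ps" using "2.prems"(1) False by auto
    then have "x + 1 \<le> x1" using ee_ge by blast
    then have "(x2,y2) \<noteq> (x,y)" using "2.prems"(3) by auto
    then have "(x2,y2) \<in> east_edges (x+1,y) ps" using "2.prems"(2) by auto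
    then show ?thesis using "2.IH" "2.prems"(3) h1 by blast
  qed
next
  case (3 x y ps) then show ?case by simp
qed

lemma ee_unique: "(x, y1) \<in> east_edges p ps \<Longrightarrow> (x, y2) \<in> east_edges p ps \<Longrightarrow> y1 = y2"
  using ee_mono[of x y1 p ps x y2] ee_mono[of x y2 p ps x y1] by auto

lemma inv0_nth: "inv0 cs \<Longrightarrow> i < length cs \<Longrightarrow> fst (cs!i) < snd (cs!i)"
proof (induction cs arbitrary: i rule: inv0.induct)
  case (3 b t b' t' cs)
  then show ?case by (cases i) auto
qed auto

lemma tops_nth: "(\<forall>i. Suc i < length cs \<longrightarrow> snd (cs!i) \<le> snd (cs!Suc i)) \<Longrightarrow> tops cs"
proof (induction cs rule: tops.induct)
  case (3 b t b' t' cs)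
  have "t \<le> t'" using "3.prems"[rule_format, of 0] by simp
  moreover have "tops ((b',t')#cs)"
    using "3.IH" "3.prems" by (metis Suc_less_eq length_Cons nth_Cons_Suc)
  ultimately show ?case by simp
qed auto

lemma cells_of_mem: "(a, y) \<in> cells_of cs \<longleftrightarrow> (\<exists>i j. a = int i \<and> y = int j \<and> i < length cs \<and> fst (cs!i) \<le> j \<and> j < snd (cs!i))"
  unfolding cells_of_def by auto

lemma par_tops:
  assumes par: "parallelogram_polyomino (cells_of cs)" and iv: "inv0 cs"
  shows "tops cs"
proof -
  obtain q U L where PP: "cells_of cs = {(i,j). \<exists>yl yu. (i,yl) \<in> east_edges q L \<and> (i,yu) \<in> east_edges q U
                           \<and> yl \<le> j \<and> j < yu}"
    using par unfolding parallelogram_polyomino_def by blast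
  have col: "(int i, int (snd (cs!i))) \<in> east_edges q U" if i: "i < length cs" for i
  proof -
    have bt: "fst (cs!i) < snd (cs!i)" using inv0_nth[OF iv i] .
    have "(int i, int (snd (cs!i)) - 1) \<in> cells_of cs" unfolding cells_of_mem
      using i bt by (intro exI[of _ i] exI[of _ "snd (cs!i) - 1"]) auto
    then obtain yl yu where e: "(int i, yl) \<in> east_edges q L" "(int i, yu) \<in> east_edges q U"
      "yl \<le> int (snd (cs!i)) - 1" "int (snd (cs!i)) - 1 < yu" using PP by auto
    have "yl \<le> yu - 1" using e by linarith
    then have "(int i, yu - 1) \<in> cells_of cs" unfolding PP mem_Collect_eq case_prod_conv
      using e(1,2) by (intro exI[of _ yl] exI[of _ yu] conjI) auto
    then have "yu - 1 < int (snd (cs!i))" unfolding cells_of_mem by auto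
    then have "yu = int (snd (cs!i))" using e by auto
    then show ?thesis using e by simp
  qed
  show ?thesis
  proof (rule tops_nth, intro allI impI)
    fix i assume "Suc i < length cs"
    then show "snd (cs!i) \<le> snd (cs!Suc i)"
      using col[of i] col[of "Suc i"] ee_mono[of "int i" "int (snd (cs!i))" q U "int (Suc i)" "int (snd (cs!Suc i))"]
      by simp
  qed
qed



fun lowp :: "(nat \<times> nat) list \<Rightarrow> lstep list" where
  "lowp [] = []"
| "lowp [(b,t)] = StE # replicate (t - b) StN"
| "lowp ((b,t)#(b',t')#cs) = StE # replicate (b' - b) StN @ lowp ((b',t')#cs)"

fun upp :: "(nat \<times> nat) list \<Rightarrow> lstep list" where
  "upp [] = []"
| "upp [(b,t)] = [StE]"
| "upp ((b,t)#(b',t')#cs) = StE # replicate (t' - t) StN @ upp ((b',t')#cs)"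

lemma pv_ne: "path_verts p ps \<noteq> []"
  by (induction p ps rule: path_verts.induct) auto

lemma pv_rep: "path_verts (x,y) (replicate n StN @ r) = map (\<lambda>j. (x, y + int j)) [0..<n] @ path_verts (x, y + int n) r"
proof (induction n arbitrary: y)
  case 0 then show ?case by simp
next
  case (Suc n)
  have "path_verts (x,y) (replicate (Suc n) StN @ r) = (x,y) # path_verts (x,y+1) (replicate n StN @ r)" by simp
  also have "\<dots> = (x,y) # map (\<lambda>j. (x, y + 1 + int j)) [0..<n] @ path_verts (x, y + 1 + int n) r" using Suc by simp
  also have "\<dots> = map (\<lambda>j. (x, y + int j)) [0..<Suc n] @ path_verts (x, y + int (Suc n)) r"
    by (simp add: map_upt_Suc add.assoc del: upt_Suc)
  finally show ?case .
qed

lemma pv_rep_set: "set (path_verts (x,y) (replicate n StN @ r)) = {(x, y + int j) | j. j < n} \<union> set (path_verts (x, y + int n) r)"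
  unfolding pv_rep by auto

lemma pv_rep_last: "last (path_verts (x,y) (replicate n StN @ r)) = last (path_verts (x, y + int n) r)"
  unfolding pv_rep using pv_ne by simp

lemma ee_rep: "east_edges (x,y) (replicate n StN @ r) = east_edges (x, y + int n) r"
  by (induction n arbitrary: y) (auto simp: add.assoc)

lemma constr:
  assumes "inv0 cs" "tops cs" "cs \<noteq> []"
  shows "last (path_verts (x, int (fst (hd cs))) (lowp cs)) = (x + int (length cs), int (snd (last cs)))
       \<and> last (path_verts (x, int (snd (hd cs))) (upp cs)) = (x + int (length cs), int (snd (last cs)))
       \<and> (\<forall>(a,y)\<in>set (path_verts (x, int (fst (hd cs))) (lowp cs)). x \<le> a \<and> (a = x \<longrightarrow> y = int (fst (hd cs))))
       \<and> (\<forall>(a,y)\<in>set (path_verts (x, int (snd (hd cs))) (upp cs)). x \<le> a \<and> int (snd (hd cs)) \<le> y \<and> (a = x \<longrightarrow> y = int (snd (hd cs))))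
       \<and> set (path_verts (x, int (fst (hd cs))) (lowp cs)) \<inter>
           ({(x, int (fst (hd cs)) + int j) | j. j < snd (hd cs) - fst (hd cs)} \<union> set (path_verts (x, int (snd (hd cs))) (upp cs)))
         = {(x, int (fst (hd cs))), (x + int (length cs), int (snd (last cs)))}
       \<and> east_edges (x, int (fst (hd cs))) (lowp cs) = {(x + int i, int (fst (cs!i))) | i. i < length cs}
       \<and> east_edges (x, int (snd (hd cs))) (upp cs) = {(x + int i, int (snd (cs!i))) | i. i < length cs}"
  using assms
proof (induction cs arbitrary: x rule: inv0.induct)
  case 1 then show ?case by simp
next
  case (2 b t)
  then have bt: "b < t" by simp
  have L: "path_verts (x, int b) (lowp [(b,t)]) = (x, int b) # map (\<lambda>j. (x+1, int b + int j)) [0..<t-b] @ [(x+1, int t)]"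
    using bt pv_rep[of "x+1" "int b" "t-b" "[]"] by simp
  have U: "path_verts (x, int t) (upp [(b,t)]) = [(x, int t), (x+1, int t)]" by simp
  have E1: "east_edges (x, int b) (lowp [(b,t)]) = {(x, int b)}" using ee_rep[of "x+1" "int b" "t-b" "[]"] by simp
  have E2: "{(x + int i, int (fst ([(b,t)]!i))) | i. i < length [(b,t)]} = {(x, int b)}" by auto
  have E3: "{(x + int i, int (snd ([(b,t)]!i))) | i. i < length [(b,t)]} = {(x, int t)}" by auto
  have I: "set (path_verts (x, int b) (lowp [(b,t)])) \<inter> ({(x, int b + int j) | j. j < t - b} \<union> set (path_verts (x, int t) (upp [(b,t)])))
      = {(x, int b), (x + 1, int t)}"
    unfolding L U using bt by auto
  show ?case using L U E1 E2 E3 I bt by auto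
next
  case (3 b t b' t' cs)
  let ?c = "(b',t')#cs"
  have h: "b < t" "b \<le> b'" "b' < t" "t \<le> t'" "inv0 ?c" "tops ?c" using "3.prems" by auto
  note IH = "3.IH"[OF h(5) h(6), of "x+1", simplified]
  define Lc where "Lc = path_verts (x+1, int b') (lowp ?c)"
  define Uc where "Uc = path_verts (x+1, int t') (upp ?c)"
  define e where "e = (x + 1 + int (length ?c), int (snd (last ?c)))"
  have L: "set (path_verts (x, int b) (lowp ((b,t)#?c))) = insert (x, int b) ({(x+1, int b + int j) | j. j < b' - b} \<union> set Lc)"
    unfolding Lc_def using h by (simp add: pv_rep_set)
  have U: "set (path_verts (x, int t) (upp ((b,t)#?c))) = insert (x, int t) ({(x+1, int t + int j) | j. j < t' - t} \<union> set Uc)"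
    unfolding Uc_def using h by (simp add: pv_rep_set)
  have lastL: "last (path_verts (x, int b) (lowp ((b,t)#?c))) = last Lc"
    unfolding Lc_def using h pv_ne by (simp add: pv_rep_last)
  have lastU: "last (path_verts (x, int t) (upp ((b,t)#?c))) = last Uc"
    unfolding Uc_def using h pv_ne by (simp add: pv_rep_last)
  have IL: "last Lc = e" "last Uc = e" using IH unfolding Lc_def Uc_def e_def by auto
  have IL3: "\<forall>(a,y)\<in>set Lc. x + 1 \<le> a \<and> (a = x + 1 \<longrightarrow> y = int b')" using IH unfolding Lc_def by auto
  have IU4: "\<forall>(a,y)\<in>set Uc. x + 1 \<le> a \<and> int t' \<le> y \<and> (a = x + 1 \<longrightarrow> y = int t')" using IH unfolding Uc_def by auto
  have I5: "set Lc \<inter> ({(x+1, int b' + int j) | j. j < t' - b'} \<union> set Uc) = {(x+1, int b'), e}"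
    using IH unfolding Lc_def Uc_def e_def by auto
  have eL: "e \<in> set Lc" "e \<in> set Uc" using IL pv_ne unfolding Lc_def Uc_def by (metis last_in_set)+
  have LU: "set Lc \<inter> set Uc = {e}"
  proof
    show "set Lc \<inter> set Uc \<subseteq> {e}"
    proof
      fix z assume z: "z \<in> set Lc \<inter> set Uc"
      then have "z \<in> {(x+1, int b'), e}" using I5 by blast
      moreover have "z \<noteq> (x+1, int b')" using z IU4 h by auto
      ultimately show "z \<in> {e}" by auto
    qed
  qed (use eL in auto)
  have len: "x + 1 + int (length ?c) = x + int (length ((b,t)#?c))" by simp
  have lastc: "snd (last ?c) = snd (last ((b,t)#?c))" by simp
  have P1: "last (path_verts (x, int b) (lowp ((b,t)#?c))) = (x + int (length ((b,t)#?c)), int (snd (last ((b,t)#?c))))"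
    using lastL IL e_def len lastc by simp
  have P2: "last (path_verts (x, int t) (upp ((b,t)#?c))) = (x + int (length ((b,t)#?c)), int (snd (last ((b,t)#?c))))"
    using lastU IL e_def len lastc by simp
  have P3: "\<forall>(a,y)\<in>set (path_verts (x, int b) (lowp ((b,t)#?c))). x \<le> a \<and> (a = x \<longrightarrow> y = int b)"
    unfolding L using IL3 by auto
  have P4: "\<forall>(a,y)\<in>set (path_verts (x, int t) (upp ((b,t)#?c))). x \<le> a \<and> int t \<le> y \<and> (a = x \<longrightarrow> y = int t)"
    unfolding U using IU4 h by auto
  have P5: "set (path_verts (x, int b) (lowp ((b,t)#?c))) \<inter>
           ({(x, int b + int j) | j. j < t - b} \<union> set (path_verts (x, int t) (upp ((b,t)#?c))))
         = {(x, int b), e}"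
  proof
    show "{(x, int b), e} \<subseteq> set (path_verts (x, int b) (lowp ((b,t)#?c))) \<inter>
           ({(x, int b + int j) | j. j < t - b} \<union> set (path_verts (x, int t) (upp ((b,t)#?c))))"
      unfolding L U using eL h by force
  next
    show "set (path_verts (x, int b) (lowp ((b,t)#?c))) \<inter>
           ({(x, int b + int j) | j. j < t - b} \<union> set (path_verts (x, int t) (upp ((b,t)#?c)))) \<subseteq> {(x, int b), e}"
    proof
      fix z assume z: "z \<in> set (path_verts (x, int b) (lowp ((b,t)#?c))) \<inter>
           ({(x, int b + int j) | j. j < t - b} \<union> set (path_verts (x, int t) (upp ((b,t)#?c))))"
      obtain a y where zay: "z = (a,y)" by (cases z)
      have zL: "z = (x, int b) \<or> (\<exists>j. j < b' - b \<and> z = (x+1, int b + int j)) \<or> z \<in> set Lc" using z L by auto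
      have zU: "(\<exists>j. j < t - b \<and> z = (x, int b + int j)) \<or> z = (x, int t) \<or> (\<exists>j. j < t' - t \<and> z = (x+1, int t + int j)) \<or> z \<in> set Uc"
        using z U by auto
      show "z \<in> {(x, int b), e}"
      proof (cases "z = (x, int b)")
        case True then show ?thesis by simp
      next
        case False
        show ?thesis
        proof (cases "\<exists>j. j < b' - b \<and> z = (x+1, int b + int j)")
          case True
          then obtain j where j: "j < b' - b" "z = (x+1, int b + int j)" by blast
          then have "int b + int j < int t" using h by linarith
          then show ?thesis using zU j IU4 h by auto
        next
          case False2: False
          then have zLc: "z \<in> set Lc" using zL False by blast
          then have "x + 1 \<le> a" "a = x + 1 \<longrightarrow> y = int b'" using IL3 zay by auto
          then have "z \<in> set Uc" using zU zay h by auto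
          then show ?thesis using LU zLc by auto
        qed
      qed
    qed
  qed
  have E6: "east_edges (x, int b) (lowp ((b,t)#?c)) = {(x + int i, int (fst (((b,t)#?c)!i))) | i. i < length ((b,t)#?c)}"
  proof -
    have "east_edges (x, int b) (lowp ((b,t)#?c)) = insert (x, int b) (east_edges (x+1, int b') (lowp ?c))"
      using h by (simp add: ee_rep)
    also have "\<dots> = insert (x, int b) {(x + 1 + int i, int (fst (?c!i))) | i. i < length ?c}" using IH by simp
    also have "\<dots> = {(x + int i, int (fst (((b,t)#?c)!i))) | i. i < length ((b,t)#?c)}"
    proof (rule set_eqI)
      fix z
      show "z \<in> insert (x, int b) {(x + 1 + int i, int (fst (?c!i))) | i. i < length ?c} \<longleftrightarrow>
            z \<in> {(x + int i, int (fst (((b,t)#?c)!i))) | i. i < length ((b,t)#?c)}"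
      proof
        assume "z \<in> insert (x, int b) {(x + 1 + int i, int (fst (?c!i))) | i. i < length ?c}"
        then show "z \<in> {(x + int i, int (fst (((b,t)#?c)!i))) | i. i < length ((b,t)#?c)}"
        proof
          assume "z = (x, int b)" then show ?thesis by (intro CollectI exI[of _ 0]) simp
        next
          assume "z \<in> {(x + 1 + int i, int (fst (?c!i))) | i. i < length ?c}"
          then obtain i where "z = (x + 1 + int i, int (fst (?c!i)))" "i < length ?c" by blast
          then show ?thesis by (intro CollectI exI[of _ "Suc i"]) (simp add: add_ac)
        qed
      next
        assume "z \<in> {(x + int i, int (fst (((b,t)#?c)!i))) | i. i < length ((b,t)#?c)}"
        then obtain i where i: "z = (x + int i, int (fst (((b,t)#?c)!i)))" "i < length ((b,t)#?c)" by blast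
        show "z \<in> insert (x, int b) {(x + 1 + int i, int (fst (?c!i))) | i. i < length ?c}"
        proof (cases i)
          case 0 then show ?thesis using i by simp
        next
          case (Suc i') then show ?thesis using i by (intro insertI2 CollectI exI[of _ i']) (simp add: add_ac)
        qed
      qed
    qed
    finally show ?thesis .
  qed
  have E7: "east_edges (x, int t) (upp ((b,t)#?c)) = {(x + int i, int (snd (((b,t)#?c)!i))) | i. i < length ((b,t)#?c)}"
  proof -
    have "east_edges (x, int t) (upp ((b,t)#?c)) = insert (x, int t) (east_edges (x+1, int t') (upp ?c))"
      using h by (simp add: ee_rep)
    also have "\<dots> = insert (x, int t) {(x + 1 + int i, int (snd (?c!i))) | i. i < length ?c}" using IH by simp
    also have "\<dots> = {(x + int i, int (snd (((b,t)#?c)!i))) | i. i < length ((b,t)#?c)}"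
    proof (rule set_eqI)
      fix z
      show "z \<in> insert (x, int t) {(x + 1 + int i, int (snd (?c!i))) | i. i < length ?c} \<longleftrightarrow>
            z \<in> {(x + int i, int (snd (((b,t)#?c)!i))) | i. i < length ((b,t)#?c)}"
      proof
        assume "z \<in> insert (x, int t) {(x + 1 + int i, int (snd (?c!i))) | i. i < length ?c}"
        then show "z \<in> {(x + int i, int (snd (((b,t)#?c)!i))) | i. i < length ((b,t)#?c)}"
        proof
          assume "z = (x, int t)" then show ?thesis by (intro CollectI exI[of _ 0]) simp
        next
          assume "z \<in> {(x + 1 + int i, int (snd (?c!i))) | i. i < length ?c}"
          then obtain i where "z = (x + 1 + int i, int (snd (?c!i)))" "i < length ?c" by blast
          then show ?thesis by (intro CollectI exI[of _ "Suc i"]) (simp add: add_ac)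
        qed
      next
        assume "z \<in> {(x + int i, int (snd (((b,t)#?c)!i))) | i. i < length ((b,t)#?c)}"
        then obtain i where i: "z = (x + int i, int (snd (((b,t)#?c)!i)))" "i < length ((b,t)#?c)" by blast
        show "z \<in> insert (x, int t) {(x + 1 + int i, int (snd (?c!i))) | i. i < length ?c}"
        proof (cases i)
          case 0 then show ?thesis using i by simp
        next
          case (Suc i') then show ?thesis using i by (intro insertI2 CollectI exI[of _ i']) (simp add: add_ac)
        qed
      qed
    qed
    finally show ?thesis .
  qed
  have ee: "e = (x + int (length ((b,t)#?c)), int (snd (last ((b,t)#?c))))" using e_def len lastc by simp
  show ?case using P1 P2 P3 P4 P5 E6 E7 unfolding ee by simp
qed



lemma tops_par:
  assumes iv: "inv0 cs" and tp: "tops cs" and ne: "cs \<noteq> []"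
  shows "parallelogram_polyomino (cells_of cs)"
proof -
  define b0 where "b0 = fst (hd cs)"
  define t0 where "t0 = snd (hd cs)"
  have hd0: "hd cs = cs ! 0" using ne by (simp add: hd_conv_nth)
  have bt: "b0 < t0" using inv0_nth[OF iv, of 0] ne hd0 unfolding b0_def t0_def by simp
  note C = constr[OF iv tp ne, of 0, folded b0_def t0_def]
  define q where "q = (0::int, int b0)"
  define U where "U = replicate (t0 - b0) StN @ upp cs"
  define L where "L = lowp cs"
  have t0e: "int b0 + int (t0 - b0) = int t0" using bt by simp
  have lU: "last (path_verts q U) = last (path_verts (0, int t0) (upp cs))"
    unfolding q_def U_def pv_rep_last t0e ..
  have sU: "set (path_verts q U) = {(0, int b0 + int j) | j. j < t0 - b0} \<union> set (path_verts (0, int t0) (upp cs))"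
    unfolding q_def U_def pv_rep_set t0e ..
  have eU: "east_edges q U = {(int i, int (snd (cs!i))) | i. i < length cs}"
    unfolding q_def U_def ee_rep t0e using C by simp
  have eL: "east_edges q L = {(int i, int (fst (cs!i))) | i. i < length cs}"
    unfolding q_def L_def using C by simp
  have c1: "last (path_verts q U) = last (path_verts q L)" using lU C unfolding q_def L_def by simp
  have c2: "set (path_verts q U) \<inter> set (path_verts q L) = {q, last (path_verts q U)}"
  proof -
    have "set (path_verts q U) \<inter> set (path_verts q L) = set (path_verts (0, int b0) (lowp cs)) \<inter>
      ({(0, int b0 + int j) | j. j < t0 - b0} \<union> set (path_verts (0, int t0) (upp cs)))"
      unfolding sU unfolding q_def L_def by blast
    also have "\<dots> = {(0, int b0), (int (length cs), int (snd (last cs)))}" using C by simp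
    also have "\<dots> = {q, last (path_verts q U)}" using lU C unfolding q_def by simp
    finally show ?thesis .
  qed
  have c3: "cells_of cs = {(i,j). \<exists>yl yu. (i,yl) \<in> east_edges q L \<and> (i,yu) \<in> east_edges q U
                           \<and> yl \<le> j \<and> j < yu}"
  proof (rule set_eqI)
    fix z :: cell
    obtain a y where z: "z = (a,y)" by (cases z)
    show "z \<in> cells_of cs \<longleftrightarrow> z \<in> {(i,j). \<exists>yl yu. (i,yl) \<in> east_edges q L \<and> (i,yu) \<in> east_edges q U \<and> yl \<le> j \<and> j < yu}"
    proof
      assume "z \<in> cells_of cs"
      then obtain i j where ij: "a = int i" "y = int j" "i < length cs" "fst (cs!i) \<le> j" "j < snd (cs!i)"
        using z cells_of_mem by auto
      have "(a, int (fst (cs!i))) \<in> east_edges q L" "(a, int (snd (cs!i))) \<in> east_edges q U"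
        using eL eU ij by auto
      then show "z \<in> {(i,j). \<exists>yl yu. (i,yl) \<in> east_edges q L \<and> (i,yu) \<in> east_edges q U \<and> yl \<le> j \<and> j < yu}"
        using z ij by force
    next
      assume "z \<in> {(i,j). \<exists>yl yu. (i,yl) \<in> east_edges q L \<and> (i,yu) \<in> east_edges q U \<and> yl \<le> j \<and> j < yu}"
      then obtain yl yu where h: "(a,yl) \<in> east_edges q L" "(a,yu) \<in> east_edges q U" "yl \<le> y" "y < yu" using z by auto
      obtain i where i: "a = int i" "yl = int (fst (cs!i))" "i < length cs" using h(1) eL by auto
      obtain i' where i': "a = int i'" "yu = int (snd (cs!i'))" "i' < length cs" using h(2) eU by auto
      have "i = i'" using i i' by simp
      have "y = int (nat y)" using h i by simp
      then show "z \<in> cells_of cs" unfolding z cells_of_mem using h i i' \<open>i = i'\<close>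
        by (intro exI[of _ i] exI[of _ "nat y"]) auto
    qed
  qed
  show ?thesis unfolding parallelogram_polyomino_def using c1 c2 c3 by blast
qed

theorem mainTheorem3:
  fixes n :: nat and \<pi> :: "nat list"
  assumes "n \<ge> 1" and "distinct \<pi>" and "set \<pi> = {1..n}"
  shows "avoids321 \<pi> \<longleftrightarrow> parallelogram_polyomino (Phi4 \<pi>)"
proof -
  obtain s where s: "valid_deco_steps s" "perm_of_steps s = \<pi>" using steps_exist[OF assms(2,3)] by blast
  have the: "(THE s. valid_deco_steps s \<and> perm_of_steps s = \<pi>) = s"
    using s steps_inj by (intro the_equality) auto
  have ph: "Phi4 \<pi> = cells_of (cols s)" unfolding Phi4_def the using build_cols by simp
  have "length \<pi> = n" using assms distinct_card[of \<pi>] by simp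
  then have "s \<noteq> []" using s perm_of_steps_props[of s] assms(1) by auto
  note M = main_inv[OF s(1) this]
  have "parallelogram_polyomino (cells_of (cols s)) \<longleftrightarrow> tops (cols s)"
    using par_tops tops_par M by blast
  then show ?thesis using M ph s(2) by simp
qed

end
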